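(* Let $\beta$ be an action of a finite abelian group $H$ on a $C^*$-algebra $A$, and let $p^\beta=\frac{1}{|H|}\sum_{h\in H}u_h\in M(A\rtimes_\beta H)$. Then there is a $^*$-isomorphism $$\psi\colon A\to p^\beta(A\rtimes_\beta H\rtimes_{\widehat\beta}\widehat H)p^\beta$$ satisfying $\psi(A^H)=p^\beta(A\rtimes_\beta H)p^\beta$; thus the inclusions $A^H\subseteq A$ and $p^\beta(A\rtimes_\beta H)p^\beta\subseteq p^\beta(A\rtimes_\beta H\rtimes_{\widehat\beta}\widehat H)p^\beta$ are isomorphic. Moreover, for each subgroup $L\subseteq H$, $\psi(A^L)=p^\beta(A\rtimes_\beta H\rtimes_{\widehat\beta}L^\perp)p^\beta$.
   Context: $u\colon H\to UM(A\rtimes_\beta H)$ is the canonical unitary representation implementing $\beta$; $p^\beta$ is viewed also as a multiplier of $A\rtimes_\beta H\rtimes_{\widehat\beta}\widehat H$. $\widehat\beta$ is the dual action of $\widehat H$ on $A\rtimes_\beta H$, $\widehat\beta_x(\sum_h a_hu_h)=\sum_h\overline{\langle h,x\rangle}a_hu_h$. $A^L$ denotes the fixed-point algebra of $\beta|_L$, $L^\perp=\{x\in\widehat H:\langle l,x\rangle=1\ \forall l\in L\}$, and $A\rtimes_\beta H\rtimes_{\widehat\beta}L^\perp$ is viewed as a subalgebra of $A\rtimes_\beta H\rtimes_{\widehat\beta}\widehat H$ canonically. Two inclusions $B_1\subseteq A_1$, $B_2\subseteq A_2$ are isomorphic if there is a $^*$-isomorphism $\phi\colon A_1\to A_2$ with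 $\phi(B_1)=B_2$. *)

theory Defs
  imports Complex_Main "HOL-Algebra.Group" "HOL-Library.Function_Algebras"
begin

section \<open>C*-algebras (possibly non-unital), given by a complex scalar multiplication and an involution\<close>

definition cstar_algebra ::
  "('a::{real_normed_algebra,banach} \<Rightarrow> 'a) \<Rightarrow> (complex \<Rightarrow> 'a \<Rightarrow> 'a) \<Rightarrow> bool" where
  "cstar_algebra st sm \<longleftrightarrow>
     (\<forall>c x y. sm c (x + y) = sm c x + sm c y) \<and>
     (\<forall>c d x. sm (c + d) x = sm c x + sm d x) \<and>
     (\<forall>c d x. sm (c * d) x = sm c (sm d x)) \<and>
     (\<forall>r x. sm (complex_of_real r) x = r *\<^sub>R x) \<and>
     (\<forall>c x y. sm c (x * y) = sm c x * y \<and> sm c (x * y) = x * sm c y) \<and>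
     (\<forall>c x. norm (sm c x) = cmod c * norm x) \<and>
     (\<forall>x. st (st x) = x) \<and>
     (\<forall>x y. st (x + y) = st x + st y) \<and>
     (\<forall>c x. st (sm c x) = sm (cnj c) (st x)) \<and>
     (\<forall>x y. st (x * y) = st y * st x) \<and>
     (\<forall>x. norm (st x * x) = (norm x)\<^sup>2)"

definition star_automorphism ::
  "('a::{real_normed_algebra,banach} \<Rightarrow> 'a) \<Rightarrow> (complex \<Rightarrow> 'a \<Rightarrow> 'a) \<Rightarrow> ('a \<Rightarrow> 'a) \<Rightarrow> bool" where
  "star_automorphism st sm \<phi> \<longleftrightarrow> bij \<phi> \<and>
     (\<forall>x y. \<phi> (x + y) = \<phi> x + \<phi> y) \<and>
     (\<forall>x y. \<phi> (x * y) = \<phi> x * \<phi> y) \<and>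
     (\<forall>c x. \<phi> (sm c x) = sm c (\<phi> x)) \<and>
     (\<forall>x. \<phi> (st x) = st (\<phi> x))"

definition group_action_on ::
  "('g, 'm) monoid_scheme \<Rightarrow> ('a::{real_normed_algebra,banach} \<Rightarrow> 'a) \<Rightarrow> (complex \<Rightarrow> 'a \<Rightarrow> 'a)
     \<Rightarrow> ('g \<Rightarrow> 'a \<Rightarrow> 'a) \<Rightarrow> bool" where
  "group_action_on G st sm \<beta> \<longleftrightarrow>
     (\<forall>g\<in>carrier G. star_automorphism st sm (\<beta> g)) \<and>
     \<beta> \<one>\<^bsub>G\<^esub> = id \<and>
     (\<forall>g\<in>carrier G. \<forall>h\<in>carrier G. \<beta> (g \<otimes>\<^bsub>G\<^esub> h) = \<beta> g \<circ> \<beta> h)"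

definition fixed_points :: "('g \<Rightarrow> 'a \<Rightarrow> 'a) \<Rightarrow> 'g set \<Rightarrow> 'a set" where
  "fixed_points \<beta> L = {a. \<forall>l\<in>L. \<beta> l a = a}"

text \<open>Characters of G, normalised to the value 1 outside the carrier.
  The group operations of the dual group are pointwise multiplication and
  complex conjugation, with the trivial character as unit.\<close>
definition characters :: "('g, 'm) monoid_scheme \<Rightarrow> ('g \<Rightarrow> complex) set" where
  "characters G = {\<chi>. (\<forall>g\<in>carrier G. \<forall>h\<in>carrier G. \<chi> (g \<otimes>\<^bsub>G\<^esub> h) = \<chi> g * \<chi> h) \<and>
                      (\<forall>g\<in>carrier G. cmod (\<chi> g) = 1) \<and> (\<forall>g. g \<notin> carrier G \<longrightarrow> \<chi> g = 1)}"

definition char_mult :: "('g \<Rightarrow> complex) \<Rightarrow> ('g \<Rightarrow> complex) \<Rightarrow> ('g \<Rightarrow> complex)" where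
  "char_mult x y = (\<lambda>g. x g * y g)"

definition char_inv :: "('g \<Rightarrow> complex) \<Rightarrow> ('g \<Rightarrow> complex)" where
  "char_inv x = (\<lambda>g. cnj (x g))"

definition char_one :: "'g \<Rightarrow> complex" where
  "char_one = (\<lambda>g. 1)"

definition annihilator :: "('g, 'm) monoid_scheme \<Rightarrow> 'g set \<Rightarrow> ('g \<Rightarrow> complex) set" where
  "annihilator G L = {x \<in> characters G. \<forall>l\<in>L. x l = 1}"

section \<open>Crossed products by finite groups (algebraic = C*-crossed product)\<close>

text \<open>Elements of B \<rtimes> S are functions f : S \<rightarrow> B (zero outside S), f = \<Sum> f(s) u_s.\<close>
definition cp_carrier :: "'s set \<Rightarrow> 'b set \<Rightarrow> ('s \<Rightarrow> 'b::zero) set" where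
  "cp_carrier S B = {f. (\<forall>s\<in>S. f s \<in> B) \<and> (\<forall>s. s \<notin> S \<longrightarrow> f s = 0)}"

text \<open>(a u_g)(b u_h) = a \<alpha>_g(b) u_{gh}.\<close>
definition cp_mult ::
  "'s set \<Rightarrow> ('s \<Rightarrow> 's \<Rightarrow> 's) \<Rightarrow> ('s \<Rightarrow> 's) \<Rightarrow> ('b \<Rightarrow> 'b \<Rightarrow> 'b) \<Rightarrow> ('s \<Rightarrow> 'b \<Rightarrow> 'b)
     \<Rightarrow> ('s \<Rightarrow> 'b::comm_monoid_add) \<Rightarrow> ('s \<Rightarrow> 'b) \<Rightarrow> ('s \<Rightarrow> 'b)" where
  "cp_mult S gm gi bm \<alpha> f k =
     (\<lambda>t. if t \<in> S then (\<Sum>g\<in>S. bm (f g) (\<alpha> g (k (gm (gi g) t)))) else 0)"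

text \<open>(a u_g)^* = \<alpha>_{g^{-1}}(a^* ) u_{g^{-1}}.\<close>
definition cp_star ::
  "'s set \<Rightarrow> ('s \<Rightarrow> 's) \<Rightarrow> ('b \<Rightarrow> 'b) \<Rightarrow> ('s \<Rightarrow> 'b \<Rightarrow> 'b) \<Rightarrow> ('s \<Rightarrow> 'b::zero) \<Rightarrow> ('s \<Rightarrow> 'b)" where
  "cp_star S gi bst \<alpha> f = (\<lambda>t. if t \<in> S then \<alpha> t (bst (f (gi t))) else 0)"

definition cp_scale :: "(complex \<Rightarrow> 'b \<Rightarrow> 'b) \<Rightarrow> complex \<Rightarrow> ('s \<Rightarrow> 'b) \<Rightarrow> ('s \<Rightarrow> 'b)" where
  "cp_scale sm c f = (\<lambda>t. sm c (f t))"

text \<open>The first crossed product A \<rtimes>_\<beta> H (elements 'g \<Rightarrow> 'a).\<close>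
definition CP1 :: "('g, 'm) monoid_scheme \<Rightarrow> ('g \<Rightarrow> 'a::zero) set" where
  "CP1 G = cp_carrier (carrier G) UNIV"

definition mult1 :: "('g, 'm) monoid_scheme \<Rightarrow> ('g \<Rightarrow> 'a \<Rightarrow> 'a)
     \<Rightarrow> ('g \<Rightarrow> 'a::{real_normed_algebra}) \<Rightarrow> ('g \<Rightarrow> 'a) \<Rightarrow> ('g \<Rightarrow> 'a)" where
  "mult1 G \<beta> = cp_mult (carrier G) (mult G) (m_inv G) (*) \<beta>"

definition star1 :: "('g, 'm) monoid_scheme \<Rightarrow> ('a \<Rightarrow> 'a) \<Rightarrow> ('g \<Rightarrow> 'a \<Rightarrow> 'a)
     \<Rightarrow> ('g \<Rightarrow> 'a::zero) \<Rightarrow> ('g \<Rightarrow> 'a)" where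
  "star1 G st \<beta> = cp_star (carrier G) (m_inv G) st \<beta>"

text \<open>Dual action: \<beta>^_x(\<Sum> a_h u_h) = \<Sum> cnj(<h,x>) a_h u_h.\<close>
definition dual_action :: "(complex \<Rightarrow> 'a \<Rightarrow> 'a) \<Rightarrow> ('g \<Rightarrow> complex) \<Rightarrow> ('g \<Rightarrow> 'a) \<Rightarrow> ('g \<Rightarrow> 'a)" where
  "dual_action sm x f = (\<lambda>t. sm (cnj (x t)) (f t))"

text \<open>The double crossed product A \<rtimes>_\<beta> H \<rtimes>_{\<beta>^} H^ (elements ('g\<Rightarrow>complex) \<Rightarrow> 'g \<Rightarrow> 'a).\<close>
definition CP2_over :: "('g, 'm) monoid_scheme \<Rightarrow> ('g \<Rightarrow> complex) set
     \<Rightarrow> (('g \<Rightarrow> complex) \<Rightarrow> 'g \<Rightarrow> 'a::zero) set" where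
  "CP2_over G K = {F \<in> cp_carrier (characters G) (CP1 G). \<forall>x. x \<notin> K \<longrightarrow> F x = 0}"

definition CP2 :: "('g, 'm) monoid_scheme \<Rightarrow> (('g \<Rightarrow> complex) \<Rightarrow> 'g \<Rightarrow> 'a::zero) set" where
  "CP2 G = cp_carrier (characters G) (CP1 G)"

definition mult2 :: "('g, 'm) monoid_scheme \<Rightarrow> (complex \<Rightarrow> 'a \<Rightarrow> 'a) \<Rightarrow> ('g \<Rightarrow> 'a \<Rightarrow> 'a)
     \<Rightarrow> (('g \<Rightarrow> complex) \<Rightarrow> 'g \<Rightarrow> 'a::real_normed_algebra) \<Rightarrow> (('g \<Rightarrow> complex) \<Rightarrow> 'g \<Rightarrow> 'a)
     \<Rightarrow> (('g \<Rightarrow> complex) \<Rightarrow> 'g \<Rightarrow> 'a)" where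
  "mult2 G sm \<beta> = cp_mult (characters G) char_mult char_inv (mult1 G \<beta>) (dual_action sm)"

definition star2 :: "('g, 'm) monoid_scheme \<Rightarrow> ('a \<Rightarrow> 'a) \<Rightarrow> (complex \<Rightarrow> 'a \<Rightarrow> 'a) \<Rightarrow> ('g \<Rightarrow> 'a \<Rightarrow> 'a)
     \<Rightarrow> (('g \<Rightarrow> complex) \<Rightarrow> 'g \<Rightarrow> 'a::zero) \<Rightarrow> (('g \<Rightarrow> complex) \<Rightarrow> 'g \<Rightarrow> 'a)" where
  "star2 G st sm \<beta> = cp_star (characters G) char_inv (star1 G st \<beta>) (dual_action sm)"

definition scale2 :: "(complex \<Rightarrow> 'a \<Rightarrow> 'a) \<Rightarrow> complex \<Rightarrow> (('g \<Rightarrow> complex) \<Rightarrow> 'g \<Rightarrow> 'a)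
     \<Rightarrow> (('g \<Rightarrow> complex) \<Rightarrow> 'g \<Rightarrow> 'a)" where
  "scale2 sm c = cp_scale (cp_scale sm) c"

text \<open>B embeds in B \<rtimes> H^ as elements supported at the unit character (b = b u_e).\<close>
definition embed2 :: "('g \<Rightarrow> 'a) \<Rightarrow> (('g \<Rightarrow> complex) \<Rightarrow> 'g \<Rightarrow> 'a::zero)" where
  "embed2 f = (\<lambda>x. if x = char_one then f else 0)"

section \<open>The projection p^\<beta> = 1/|H| \<Sum>_h u_h \<in> M(A \<rtimes> H) and its action by multiplication\<close>

text \<open>Left multiplication p f on A \<rtimes> H: p(a u_g) = 1/|H| \<Sum>_k \<beta>_k(a) u_{kg}.\<close>
definition pL1 :: "('g, 'm) monoid_scheme \<Rightarrow> (complex \<Rightarrow> 'a \<Rightarrow> 'a) \<Rightarrow> ('g \<Rightarrow> 'a \<Rightarrow> 'a)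
     \<Rightarrow> ('g \<Rightarrow> 'a::comm_monoid_add) \<Rightarrow> ('g \<Rightarrow> 'a)" where
  "pL1 G sm \<beta> f = (\<lambda>t. if t \<in> carrier G then
      (\<Sum>k\<in>carrier G. sm (1 / of_nat (card (carrier G))) (\<beta> k (f (inv\<^bsub>G\<^esub> k \<otimes>\<^bsub>G\<^esub> t)))) else 0)"

text \<open>Right multiplication of f \<in> A \<rtimes> H by the multiplier \<Sum>_k c_k u_k (c_k scalars).\<close>
definition rmul_scalars :: "('g, 'm) monoid_scheme \<Rightarrow> (complex \<Rightarrow> 'a \<Rightarrow> 'a) \<Rightarrow> ('g \<Rightarrow> complex)
     \<Rightarrow> ('g \<Rightarrow> 'a::comm_monoid_add) \<Rightarrow> ('g \<Rightarrow> 'a)" where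
  "rmul_scalars G sm c f = (\<lambda>t. if t \<in> carrier G then
      (\<Sum>k\<in>carrier G. sm (c k) (f (t \<otimes>\<^bsub>G\<^esub> inv\<^bsub>G\<^esub> k))) else 0)"

definition pR1 :: "('g, 'm) monoid_scheme \<Rightarrow> (complex \<Rightarrow> 'a \<Rightarrow> 'a)
     \<Rightarrow> ('g \<Rightarrow> 'a::comm_monoid_add) \<Rightarrow> ('g \<Rightarrow> 'a)" where
  "pR1 G sm = rmul_scalars G sm (\<lambda>k. 1 / of_nat (card (carrier G)))"

text \<open>p viewed as a multiplier of the double crossed product:
  p (b u_x) = (p b) u_x and (b u_x) p = b \<beta>^_x(p) u_x, where
  \<beta>^_x(p) = 1/|H| \<Sum>_k cnj(<k,x>) u_k.\<close>
definition pL2 :: "('g, 'm) monoid_scheme \<Rightarrow> (complex \<Rightarrow> 'a \<Rightarrow> 'a) \<Rightarrow> ('g \<Rightarrow> 'a \<Rightarrow> 'a)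
     \<Rightarrow> (('g \<Rightarrow> complex) \<Rightarrow> 'g \<Rightarrow> 'a::comm_monoid_add) \<Rightarrow> (('g \<Rightarrow> complex) \<Rightarrow> 'g \<Rightarrow> 'a)" where
  "pL2 G sm \<beta> F = (\<lambda>x. pL1 G sm \<beta> (F x))"

definition pR2 :: "('g, 'm) monoid_scheme \<Rightarrow> (complex \<Rightarrow> 'a \<Rightarrow> 'a)
     \<Rightarrow> (('g \<Rightarrow> complex) \<Rightarrow> 'g \<Rightarrow> 'a::comm_monoid_add) \<Rightarrow> (('g \<Rightarrow> complex) \<Rightarrow> 'g \<Rightarrow> 'a)" where
  "pR2 G sm F = (\<lambda>x. rmul_scalars G sm (\<lambda>k. cnj (x k) / of_nat (card (carrier G))) (F x))"

definition corner1 :: "('g, 'm) monoid_scheme \<Rightarrow> (complex \<Rightarrow> 'a \<Rightarrow> 'a) \<Rightarrow> ('g \<Rightarrow> 'a \<Rightarrow> 'a)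
     \<Rightarrow> ('g \<Rightarrow> 'a::comm_monoid_add) set" where
  "corner1 G sm \<beta> = (\<lambda>f. pL1 G sm \<beta> (pR1 G sm f)) ` CP1 G"

definition corner2 :: "('g, 'm) monoid_scheme \<Rightarrow> (complex \<Rightarrow> 'a \<Rightarrow> 'a) \<Rightarrow> ('g \<Rightarrow> 'a \<Rightarrow> 'a)
     \<Rightarrow> ('g \<Rightarrow> complex) set \<Rightarrow> (('g \<Rightarrow> complex) \<Rightarrow> 'g \<Rightarrow> 'a::comm_monoid_add) set" where
  "corner2 G sm \<beta> K = (\<lambda>F. pL2 G sm \<beta> (pR2 G sm F)) ` CP2_over G K"

definition star_iso_onto :: "('g, 'm) monoid_scheme \<Rightarrow> ('a::{real_normed_algebra,banach} \<Rightarrow> 'a)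
     \<Rightarrow> (complex \<Rightarrow> 'a \<Rightarrow> 'a) \<Rightarrow> ('g \<Rightarrow> 'a \<Rightarrow> 'a)
     \<Rightarrow> ('a \<Rightarrow> ('g \<Rightarrow> complex) \<Rightarrow> 'g \<Rightarrow> 'a) \<Rightarrow> (('g \<Rightarrow> complex) \<Rightarrow> 'g \<Rightarrow> 'a) set \<Rightarrow> bool" where
  "star_iso_onto G st sm \<beta> \<psi> C \<longleftrightarrow> bij_betw \<psi> UNIV C \<and>
     (\<forall>a b. \<psi> (a + b) = \<psi> a + \<psi> b) \<and>
     (\<forall>c a. \<psi> (sm c a) = scale2 sm c (\<psi> a)) \<and>
     (\<forall>a b. \<psi> (a * b) = mult2 G sm \<beta> (\<psi> a) (\<psi> b)) \<and>
     (\<forall>a. \<psi> (st a) = star2 G st sm \<beta> (\<psi> a))"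

end

theory Submission
  imports Defs "HOL-Algebra.Multiplicative_Group" "HOL-Algebra.Generated_Groups"
begin


definition uchar :: "('g,'m) monoid_scheme \<Rightarrow> 'g set \<Rightarrow> ('g \<Rightarrow> complex) \<Rightarrow> bool" where
 "uchar G H \<chi> \<longleftrightarrow> (\<forall>x\<in>H. \<forall>y\<in>H. \<chi> (x \<otimes>\<^bsub>G\<^esub> y) = \<chi> x * \<chi> y) \<and> (\<forall>x\<in>H. cmod (\<chi> x) = 1)"

context comm_group begin

lemma uchar_one: assumes "uchar G H \<chi>" "subgroup H G" shows "\<chi> \<one> = 1"
proof -
  have o: "\<one> \<in> H" using subgroup.one_closed[OF assms(2)] .
  have "\<chi> (\<one> \<otimes> \<one>) = \<chi> \<one> * \<chi> \<one>" using assms(1) o unfolding uchar_def by blast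
  then have e: "\<chi> \<one> = \<chi> \<one> * \<chi> \<one>" by simp
  have "cmod (\<chi> \<one>) = 1" using assms(1) o unfolding uchar_def by blast
  then have "\<chi> \<one> \<noteq> 0" by auto
  with e show ?thesis by simp
qed

lemma uchar_inv: assumes "uchar G H \<chi>" "subgroup H G" "x \<in> H"
  shows "\<chi> (inv x) = inverse (\<chi> x)"
proof -
  have xc: "x \<in> carrier G" using subgroup.mem_carrier[OF assms(2,3)] .
  have "inv x \<in> H" using subgroup.m_inv_closed[OF assms(2,3)] .
  then have "\<chi> (inv x \<otimes> x) = \<chi> (inv x) * \<chi> x" using assms(1,3) unfolding uchar_def by blast
  then have "\<chi> x * \<chi> (inv x) = 1" using uchar_one[OF assms(1,2)] xc by (simp add: mult.commute)
  then show ?thesis by (rule inverse_unique[symmetric])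
qed

lemma uchar_nat_pow: assumes "uchar G H \<chi>" "subgroup H G" "x \<in> H"
  shows "\<chi> (x [^] (k::nat)) = \<chi> x ^ k"
proof (induction k)
  case 0
  then show ?case using uchar_one[OF assms(1,2)] by simp
next
  case (Suc k)
  have "x [^] k \<in> H" using subgroup_int_pow_closed[OF assms(2,3), of "int k"] by (simp add: int_pow_int)
  then show ?case using Suc assms(1,3) unfolding uchar_def by (simp add: mult.commute)
qed

lemma uchar_int_pow: assumes "uchar G H \<chi>" "subgroup H G" "x \<in> H"
  shows "\<chi> (x [^] (k::int)) = \<chi> x powi k"
proof (cases "k \<ge> 0")
  case True
  then obtain m where "k = int m" using nonneg_eq_int by blast
  then show ?thesis using uchar_nat_pow[OF assms] by (simp add: int_pow_int)
next
  case False
  then obtain m where m: "k = - int m" using nonneg_eq_int[of "-k"] by (metis minus_minus neg_0_le_iff_le linorder_linear)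
  have xc: "x \<in> carrier G" using subgroup.mem_carrier[OF assms(2,3)] .
  have "x [^] m \<in> H" using subgroup_int_pow_closed[OF assms(2,3), of "int m"] by (simp add: int_pow_int)
  then show ?thesis using m uchar_nat_pow[OF assms] uchar_inv[OF assms(1,2)] xc
    by (simp add: int_pow_neg_int power_int_minus)
qed

lemma ext_step:
  assumes H: "subgroup H G" and ch: "uchar G H \<chi>" and g: "g \<in> carrier G"
    and d: "d > 0" "g [^] d \<in> H" "\<And>e. 0 < e \<Longrightarrow> e < d \<Longrightarrow> g [^] e \<notin> H"
    and w: "\<omega> ^ d = \<chi> (g [^] d)" "cmod \<omega> = 1"
  shows "\<exists>H' \<chi>'. subgroup H' G \<and> H \<subseteq> H' \<and> g \<in> H' \<and> uchar G H' \<chi>'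
            \<and> (\<forall>h\<in>H. \<chi>' h = \<chi> h) \<and> \<chi>' g = \<omega>"
proof -
  have w0: "\<omega> \<noteq> 0" using w by auto
  have Hc: "H \<subseteq> carrier G" using subgroup.subset[OF H] .
  have gd: "g [^] (int d) \<in> H" using d(2) by (simp add: int_pow_int)
  have powH: "\<chi> (g [^] k) = \<omega> powi k" if kH: "g [^] (k::int) \<in> H" for k
  proof -
    define q where "q = k div int d"
    define r where "r = k mod int d"
    have kqr: "k = int d * q + r" unfolding q_def r_def by simp
    have r0: "0 \<le> r" "r < int d" using d(1) unfolding r_def by auto
    have e1: "g [^] k = (g [^] (int d)) [^] q \<otimes> g [^] r"
      using g kqr by (simp add: int_pow_mult int_pow_pow)
    have "g [^] r = inv ((g [^] (int d)) [^] q) \<otimes> ((g [^] (int d)) [^] q \<otimes> g [^] r)"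
      using g by (simp add: m_assoc[symmetric])
    then have "g [^] r = inv ((g [^] (int d)) [^] q) \<otimes> g [^] k"
      using e1 by simp
    moreover have "inv ((g [^] (int d)) [^] q) \<in> H"
      using subgroup.m_inv_closed[OF H subgroup_int_pow_closed[OF H gd]] .
    ultimately have grH: "g [^] r \<in> H" using subgroup.m_closed[OF H _ kH] by simp
    have "r = 0"
    proof (rule ccontr)
      assume "r \<noteq> 0"
      then have "0 < nat r" "nat r < d" using r0 by auto
      moreover have "g [^] (nat r) \<in> H" using grH r0 by (simp add: int_pow_int[symmetric])
      ultimately show False using d(3) by blast
    qed
    then have "g [^] k = (g [^] (int d)) [^] q" using e1 g by simp
    then have "\<chi> (g [^] k) = \<chi> (g [^] (int d)) powi q" using uchar_int_pow[OF ch H gd] by simp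
    also have "\<dots> = (\<omega> powi (int d)) powi q" using w(1) by (simp add: int_pow_int)
    also have "\<dots> = \<omega> powi k" using kqr \<open>r = 0\<close> by (simp add: power_int_mult)
    finally show ?thesis .
  qed
  have rep_eq: "\<chi> h * \<omega> powi i = \<chi> h' * \<omega> powi j"
    if hh: "h \<in> H" "h' \<in> H" and eq: "h \<otimes> g [^] i = h' \<otimes> g [^] j" for h h' and i j :: int
  proof -
    have hc: "h \<in> carrier G" "h' \<in> carrier G" using hh Hc by auto
    have "g [^] i = inv h \<otimes> (h \<otimes> g [^] i)" using hc g by (simp add: m_assoc[symmetric])
    also have "\<dots> = inv h \<otimes> (h' \<otimes> g [^] j)" using eq by simp
    finally have gi: "g [^] i = inv h \<otimes> (h' \<otimes> g [^] j)" .
    have "g [^] (i - j) = g [^] i \<otimes> inv (g [^] j)" using g by (simp add: int_pow_diff)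
    also have "\<dots> = inv h \<otimes> h'" unfolding gi using hc g by (simp add: m_assoc)
    finally have gij: "g [^] (i - j) = inv h \<otimes> h'" .
    have ih: "inv h \<in> H" using subgroup.m_inv_closed[OF H hh(1)] .
    have "inv h \<otimes> h' \<in> H" using subgroup.m_closed[OF H ih hh(2)] .
    then have gH: "g [^] (i - j) \<in> H" using gij by simp
    have "\<omega> powi (i - j) = \<chi> (inv h \<otimes> h')" using powH[OF gH] gij by simp
    also have "\<dots> = \<chi> (inv h) * \<chi> h'" using ch ih hh unfolding uchar_def by blast
    finally have "\<omega> powi (i - j) = \<chi> (inv h) * \<chi> h'" .
    then have "\<omega> powi (i - j) = \<chi> h' / \<chi> h" using uchar_inv[OF ch H hh(1)] by (simp add: field_simps)
    moreover have "\<chi> h \<noteq> 0" using ch hh unfolding uchar_def by force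
    ultimately show ?thesis using w0 by (simp add: power_int_diff field_simps)
  qed
  define H' where "H' = {h \<otimes> g [^] (i::int) | h i. h \<in> H}"
  define \<chi>' where "\<chi>' y = (SOME v. \<exists>h i. h \<in> H \<and> y = h \<otimes> g [^] (i::int) \<and> v = \<chi> h * \<omega> powi i)" for y
  have \<chi>'_eq: "\<chi>' (h \<otimes> g [^] i) = \<chi> h * \<omega> powi i" if "h \<in> H" for h and i :: int
  proof -
    have "\<exists>v. \<exists>h' i'. h' \<in> H \<and> h \<otimes> g [^] i = h' \<otimes> g [^] (i'::int) \<and> v = \<chi> h' * \<omega> powi i'"
      using that by blast
    then have "\<exists>h' i'. h' \<in> H \<and> h \<otimes> g [^] i = h' \<otimes> g [^] (i'::int) \<and> \<chi>' (h \<otimes> g [^] i) = \<chi> h' * \<omega> powi i'"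
      unfolding \<chi>'_def by (rule someI_ex)
    then obtain h' i' where o: "h' \<in> H" "h \<otimes> g [^] i = h' \<otimes> g [^] (i'::int)"
       "\<chi>' (h \<otimes> g [^] i) = \<chi> h' * \<omega> powi i'" by blast
    then show ?thesis using rep_eq[OF that o(1) o(2)] by simp
  qed
  have H'c: "H' \<subseteq> carrier G" unfolding H'_def using Hc g by auto
  have mulH': "(h \<otimes> g [^] i) \<otimes> (h' \<otimes> g [^] j) = (h \<otimes> h') \<otimes> g [^] (i + j)"
    if "h \<in> H" "h' \<in> H" for h h' and i j :: int
  proof -
    have hc: "h \<in> carrier G" "h' \<in> carrier G" using that Hc by auto
    then show ?thesis using g by (simp add: int_pow_mult m_ac)
  qed
  have sub: "subgroup H' G"
  proof (rule subgroupI)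
    show "H' \<subseteq> carrier G" by (rule H'c)
    show "H' \<noteq> {}" unfolding H'_def using subgroup.one_closed[OF H] by blast
    show "inv a \<in> H'" if "a \<in> H'" for a
    proof -
      obtain h i where a: "a = h \<otimes> g [^] (i::int)" "h \<in> H" using \<open>a \<in> H'\<close> unfolding H'_def by blast
      have "inv a = inv h \<otimes> g [^] (-i)" using a Hc g by (auto simp: inv_mult int_pow_neg)
      then show ?thesis unfolding H'_def using subgroup.m_inv_closed[OF H a(2)] by blast
    qed
    show "a \<otimes> b \<in> H'" if "a \<in> H'" "b \<in> H'" for a b
    proof -
      obtain h i where a: "a = h \<otimes> g [^] (i::int)" "h \<in> H" using \<open>a \<in> H'\<close> unfolding H'_def by blast
      obtain h' j where b: "b = h' \<otimes> g [^] (j::int)" "h' \<in> H" using \<open>b \<in> H'\<close> unfolding H'_def by blast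
      show ?thesis using mulH'[OF a(2) b(2)] a b subgroup.m_closed[OF H a(2) b(2)] unfolding H'_def by blast
    qed
  qed
  have gen: "h = h \<otimes> g [^] (0::int)" if "h \<in> carrier G" for h using that by simp
  have HH': "H \<subseteq> H'"
  proof
    fix h assume hH: "h \<in> H"
    then have "h = h \<otimes> g [^] (0::int)" using Hc by auto
    then show "h \<in> H'" unfolding H'_def using hH by blast
  qed
  have gH': "g = \<one> \<otimes> g [^] (1::int)" using g by simp
  have gH'': "g \<in> H'" unfolding H'_def using gH' subgroup.one_closed[OF H] by blast
  have uc: "uchar G H' \<chi>'"
    unfolding uchar_def
  proof (intro conjI ballI)
    fix a b assume "a \<in> H'" "b \<in> H'"
    then obtain h i h' j where a: "a = h \<otimes> g [^] (i::int)" "h \<in> H"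
       and b: "b = h' \<otimes> g [^] (j::int)" "h' \<in> H" unfolding H'_def by blast
    have "\<chi>' (a \<otimes> b) = \<chi> (h \<otimes> h') * \<omega> powi (i + j)"
      using mulH'[OF a(2) b(2)] a b \<chi>'_eq[OF subgroup.m_closed[OF H a(2) b(2)], of "i + j"] by simp
    also have "\<dots> = (\<chi> h * \<omega> powi i) * (\<chi> h' * \<omega> powi j)"
      using ch a(2) b(2) w0 unfolding uchar_def by (simp add: power_int_add)
    finally show "\<chi>' (a \<otimes> b) = \<chi>' a * \<chi>' b" using a b \<chi>'_eq by simp
  next
    fix a assume "a \<in> H'"
    then obtain h i where a: "a = h \<otimes> g [^] (i::int)" "h \<in> H" unfolding H'_def by blast
    show "cmod (\<chi>' a) = 1" using a \<chi>'_eq ch w unfolding uchar_def by (simp add: norm_mult norm_power_int)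
  qed
  have agree: "\<forall>h\<in>H. \<chi>' h = \<chi> h"
  proof
    fix h assume hH: "h \<in> H"
    then have "\<chi>' h = \<chi>' (h \<otimes> g [^] (0::int))" using Hc by auto
    also have "\<dots> = \<chi> h" using \<chi>'_eq[OF hH, of 0] by simp
    finally show "\<chi>' h = \<chi> h" .
  qed
  have "\<chi>' g = \<omega>" using \<chi>'_eq[OF subgroup.one_closed[OF H], of 1] gH' uchar_one[OF ch H] by simp
  then show ?thesis using sub HH' gH'' uc agree by blast
qed


lemma order_pos: assumes fin: "finite (carrier G)" shows "order G > 0"
  unfolding order_def using fin one_closed by (auto simp: card_gt_0_iff)

lemma ex_pow_in: assumes fin: "finite (carrier G)" and H: "subgroup H G" and g: "g \<in> carrier G"
  shows "\<exists>d::nat. 0 < d \<and> g [^] d \<in> H"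
proof -
  have "g [^] order G = \<one>" by (rule pow_order_eq_1[OF g])
  then have "g [^] order G \<in> H" using subgroup.one_closed[OF H] by simp
  then show ?thesis using order_pos[OF fin] by blast
qed

lemma ext_full:
  assumes fin: "finite (carrier G)"
  shows "subgroup H G \<Longrightarrow> uchar G H \<chi> \<Longrightarrow> \<exists>\<chi>'. uchar G (carrier G) \<chi>' \<and> (\<forall>h\<in>H. \<chi>' h = \<chi> h)"
proof (induction "card (carrier G - H)" arbitrary: H \<chi> rule: less_induct)
  case less
  show ?case
  proof (cases "H = carrier G")
    case True then show ?thesis using less.prems by blast
  next
    case False
    then obtain g where g: "g \<in> carrier G" "g \<notin> H" using subgroup.subset[OF less.prems(1)] by blast
    have ex: "\<exists>d::nat. 0 < d \<and> g [^] d \<in> H" by (rule ex_pow_in[OF fin less.prems(1) g(1)])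
    define d where "d = (LEAST d::nat. 0 < d \<and> g [^] d \<in> H)"
    have d: "0 < d" "g [^] d \<in> H" using LeastI_ex[OF ex] unfolding d_def by auto
    have dmin: "g [^] e \<notin> H" if "0 < e" "e < d" for e
      using not_less_Least[of e "\<lambda>d::nat. 0 < d \<and> g [^] d \<in> H"] that unfolding d_def by auto
    define z where "z = \<chi> (g [^] d)"
    have z1: "cmod z = 1" using less.prems(2) d(2) unfolding uchar_def z_def by blast
    define \<omega> where "\<omega> = cis (Arg z / real d)"
    have w1: "\<omega> ^ d = \<chi> (g [^] d)"
    proof -
      have "\<omega> ^ d = cis (Arg z)" unfolding \<omega>_def DeMoivre using d(1) by simp
      also have "\<dots> = z" using rcis_cmod_Arg[of z] z1 by (simp add: rcis_def)
      finally show ?thesis unfolding z_def .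
    qed
    have w2: "cmod \<omega> = 1" unfolding \<omega>_def by simp
    obtain H' \<chi>' where H': "subgroup H' G" "H \<subseteq> H'" "g \<in> H'" "uchar G H' \<chi>'" "\<forall>h\<in>H. \<chi>' h = \<chi> h"
      using ext_step[OF less.prems(1,2) g(1) d(1) d(2) dmin w1 w2] by blast
    have "carrier G - H' \<subset> carrier G - H" using H'(2,3) g by blast
    then have "card (carrier G - H') < card (carrier G - H)"
      by (rule psubset_card_mono[rotated]) (use fin in simp)
    then obtain \<chi>'' where "uchar G (carrier G) \<chi>''" "\<forall>h\<in>H'. \<chi>'' h = \<chi>' h"
      using less.hyps[OF _ H'(1) H'(4)] by blast
    moreover have "\<forall>h\<in>H. \<chi>'' h = \<chi> h" using calculation(2) H'(2,5) by auto
    ultimately show ?thesis by blast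
  qed
qed

lemma separate:
  assumes fin: "finite (carrier G)" and m: "m \<in> carrier G" "m \<noteq> \<one>"
  shows "\<exists>\<chi>\<in>characters G. \<chi> m \<noteq> 1"
proof -
  have H: "subgroup {\<one>} G" by (rule triv_subgroup)
  have ch: "uchar G {\<one>} (\<lambda>_. 1)" unfolding uchar_def by simp
  have ex: "\<exists>d::nat. 0 < d \<and> m [^] d \<in> {\<one>}" by (rule ex_pow_in[OF fin H m(1)])
  define d where "d = (LEAST d::nat. 0 < d \<and> m [^] d \<in> {\<one>})"
  have d: "0 < d" "m [^] d \<in> {\<one>}" using LeastI_ex[OF ex] unfolding d_def by auto
  have dmin: "m [^] e \<notin> {\<one>}" if "0 < e" "e < d" for e
    using not_less_Least[of e "\<lambda>d::nat. 0 < d \<and> m [^] d \<in> {\<one>}"] that unfolding d_def by auto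
  have "d \<noteq> 1" using d(2) m by auto
  then have d2: "d \<ge> 2" using d(1) by linarith
  define \<omega> where "\<omega> = cis (2 * pi / real d)"
  have w1: "\<omega> ^ d = (\<lambda>_. 1) (m [^] d)"
  proof -
    have "\<omega> ^ d = cis (2 * pi)" unfolding \<omega>_def DeMoivre using d(1) by simp
    then show ?thesis by simp
  qed
  have w2: "cmod \<omega> = 1" unfolding \<omega>_def by simp
  have wn1: "\<omega> \<noteq> 1"
  proof
    assume "\<omega> = 1"
    then have "cos (2 * pi / real d) = 1" unfolding \<omega>_def using cis.sel(1)[of "2 * pi / real d"] by simp
    then obtain k :: int where k: "2 * pi / real d = of_int k * 2 * pi" using cos_one_2pi_int by blast
    then have "of_int k = 1 / real d" using d(1) by (simp add: field_simps)
    moreover have "0 < 1 / real d" "1 / real d < 1" using d2 by auto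
    ultimately have "0 < real_of_int k \<and> real_of_int k < 1" by simp
    then have "0 < k \<and> k < 1" by simp
    then show False by linarith
  qed
  obtain H' \<chi>' where H': "subgroup H' G" "{\<one>} \<subseteq> H'" "m \<in> H'" "uchar G H' \<chi>'" "\<chi>' m = \<omega>"
    using ext_step[OF H ch m(1) d(1) d(2) dmin w1 w2] by blast
  obtain \<chi>'' where \<chi>'': "uchar G (carrier G) \<chi>''" "\<forall>h\<in>H'. \<chi>'' h = \<chi>' h"
    using ext_full[OF fin H'(1) H'(4)] by blast
  define \<chi> where "\<chi> g = (if g \<in> carrier G then \<chi>'' g else 1)" for g
  have "\<chi> \<in> characters G" using \<chi>''(1) unfolding characters_def uchar_def \<chi>_def by simp
  moreover have "\<chi> m \<noteq> 1" using \<chi>''(2) H'(3,5) wn1 m(1) unfolding \<chi>_def by simp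
  ultimately show ?thesis by blast
qed


lemma ch_mult: "x \<in> characters G \<Longrightarrow> g \<in> carrier G \<Longrightarrow> h \<in> carrier G \<Longrightarrow> x (g \<otimes> h) = x g * x h"
  unfolding characters_def by blast
lemma ch_norm: "x \<in> characters G \<Longrightarrow> g \<in> carrier G \<Longrightarrow> cmod (x g) = 1"
  unfolding characters_def by blast
lemma ch_out: "x \<in> characters G \<Longrightarrow> g \<notin> carrier G \<Longrightarrow> x g = 1"
  unfolding characters_def by blast
lemma ch_uchar: "x \<in> characters G \<Longrightarrow> uchar G (carrier G) x"
  unfolding characters_def uchar_def by blast
lemma ch_one: "x \<in> characters G \<Longrightarrow> x \<one> = 1"
  using uchar_one[OF ch_uchar subgroup_self] by blast
lemma ch_cnj: "x \<in> characters G \<Longrightarrow> g \<in> carrier G \<Longrightarrow> x g * cnj (x g) = 1"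
  using complex_norm_square[of "x g"] ch_norm[of x g] by simp
lemma ch_cnj': "x \<in> characters G \<Longrightarrow> g \<in> carrier G \<Longrightarrow> cnj (x g) * x g = 1"
  using ch_cnj[of x g] by (simp add: mult.commute)
lemma ch_ne0: "x \<in> characters G \<Longrightarrow> x g \<noteq> 0"
  using ch_norm[of x g] ch_out[of x g] by (cases "g \<in> carrier G") auto
lemma ch_inv: "x \<in> characters G \<Longrightarrow> g \<in> carrier G \<Longrightarrow> x (inv g) = cnj (x g)"
proof -
  assume x: "x \<in> characters G" and g: "g \<in> carrier G"
  have "x (inv g) = inverse (x g)" using uchar_inv[OF ch_uchar[OF x] subgroup_self g] .
  also have "\<dots> = cnj (x g)" using ch_cnj[OF x g] by (rule inverse_unique)
  finally show ?thesis .
qed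
lemma char_one_in: "char_one \<in> characters G"
  unfolding characters_def char_one_def by simp
lemma char_mult_in: "x \<in> characters G \<Longrightarrow> y \<in> characters G \<Longrightarrow> char_mult x y \<in> characters G"
  unfolding char_mult_def characters_def by (auto simp: norm_mult)
lemma char_inv_in: "x \<in> characters G \<Longrightarrow> char_inv x \<in> characters G"
  unfolding char_inv_def characters_def by auto

lemma chars_finite: assumes fin: "finite (carrier G)" shows "finite (characters G)"
proof -
  define R where "R = {z::complex. z ^ order G = 1}"
  have fR: "finite R" unfolding R_def using order_pos[OF fin] by (intro finite_roots_unity) auto
  have "characters G \<subseteq> (\<lambda>f g. if g \<in> carrier G then f g else 1) ` (carrier G \<rightarrow>\<^sub>E R)"
  proof
    fix x assume x: "x \<in> characters G"
    have "restrict x (carrier G) \<in> carrier G \<rightarrow>\<^sub>E R"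
    proof
      fix g assume g: "g \<in> carrier G"
      have "x g ^ order G = x (g [^] order G)"
        using uchar_nat_pow[OF ch_uchar[OF x] subgroup_self g] by simp
      also have "\<dots> = 1" using pow_order_eq_1[OF g] ch_one[OF x] by simp
      finally show "restrict x (carrier G) g \<in> R" unfolding R_def using g by simp
    qed auto
    moreover have "x = (\<lambda>g. if g \<in> carrier G then restrict x (carrier G) g else 1)"
      using ch_out[OF x] by auto
    ultimately show "x \<in> (\<lambda>f g. if g \<in> carrier G then f g else 1) ` (carrier G \<rightarrow>\<^sub>E R)" by blast
  qed
  moreover have "finite (carrier G \<rightarrow>\<^sub>E R)" using fin fR by (rule finite_PiE)
  ultimately show ?thesis using finite_subset by blast
qed

lemma orth_G:
  assumes fin: "finite (carrier G)" and x: "x \<in> characters G" and y: "y \<in> characters G"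
  shows "(\<Sum>k\<in>carrier G. x k * cnj (y k)) = (if x = y then of_nat (order G) else 0)"
proof (cases "x = y")
  case True
  then have "(\<Sum>k\<in>carrier G. x k * cnj (y k)) = (\<Sum>k\<in>carrier G. 1)"
    using ch_cnj[OF y] by (intro sum.cong) auto
  then show ?thesis using True by (simp add: order_def)
next
  case False
  obtain k0 where k0: "k0 \<in> carrier G" "x k0 \<noteq> y k0"
  proof (rule ccontr)
    assume "\<not> thesis"
    then have "\<forall>k\<in>carrier G. x k = y k" using that by blast
    then have "x = y" using ch_out[OF x] ch_out[OF y] by (intro ext) (metis)
    then show False using False by simp
  qed
  define z where "z k = x k * cnj (y k)" for k
  have zm: "z (k0 \<otimes> k) = z k0 * z k" if "k \<in> carrier G" for k
    unfolding z_def using ch_mult[OF x k0(1) that] ch_mult[OF y k0(1) that] by simp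
  have zk0: "z k0 \<noteq> 1"
  proof
    assume "z k0 = 1"
    then have "x k0 * cnj (y k0) * y k0 = y k0" unfolding z_def by simp
    then have "x k0 = y k0" using ch_cnj'[OF y k0(1)] by (simp add: mult.assoc)
    then show False using k0 by simp
  qed
  have "(\<Sum>k\<in>carrier G. z (k0 \<otimes> k)) = (\<Sum>k\<in>carrier G. z k)"
    by (rule sum.reindex_bij_witness[of _ "\<lambda>k. inv k0 \<otimes> k" "\<lambda>k. k0 \<otimes> k"])
       (use k0(1) in \<open>auto simp: m_assoc[symmetric]\<close>)
  then have "z k0 * (\<Sum>k\<in>carrier G. z k) = (\<Sum>k\<in>carrier G. z k)"
    using zm by (simp add: sum_distrib_left)
  then have "(\<Sum>k\<in>carrier G. z k) = 0" using zk0 by (metis mult_cancel_right2)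
  then show ?thesis using False unfolding z_def by simp
qed

lemma char_mult_inv_cancel: "x \<in> characters G \<Longrightarrow> char_mult (char_inv x) (char_mult x y) = y"
  unfolding char_mult_def char_inv_def
proof (rule ext)
  fix g assume x: "x \<in> characters G"
  show "cnj (x g) * (x g * y g) = y g"
    using ch_cnj'[OF x, of g] ch_out[OF x, of g] by (cases "g \<in> carrier G") (simp_all add: mult.assoc[symmetric])
qed

lemma char_mult_inv_cancel': "x \<in> characters G \<Longrightarrow> char_mult x (char_mult (char_inv x) y) = y"
  unfolding char_mult_def char_inv_def
proof (rule ext)
  fix g assume x: "x \<in> characters G"
  show "x g * (cnj (x g) * y g) = y g"
    using ch_cnj[OF x, of g] ch_out[OF x, of g] by (cases "g \<in> carrier G") (simp_all add: mult.assoc[symmetric])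
qed

lemma orth_X:
  assumes fin: "finite (carrier G)" and m: "m \<in> carrier G"
  shows "(\<Sum>x\<in>characters G. x m) = (if m = \<one> then of_nat (card (characters G)) else 0)"
proof (cases "m = \<one>")
  case True
  then have "(\<Sum>x\<in>characters G. x m) = (\<Sum>x\<in>characters G. 1)" using ch_one by (intro sum.cong) auto
  then show ?thesis using True by simp
next
  case False
  obtain \<chi> where \<chi>: "\<chi> \<in> characters G" "\<chi> m \<noteq> 1" using separate[OF fin m False] by blast
  have "(\<Sum>x\<in>characters G. char_mult \<chi> x m) = (\<Sum>x\<in>characters G. x m)"
    by (rule sum.reindex_bij_witness[of _ "char_mult (char_inv \<chi>)" "char_mult \<chi>"])
       (use \<chi>(1) in \<open>auto simp: char_mult_inv_cancel char_mult_inv_cancel' char_mult_in char_inv_in\<close>)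
  then have "\<chi> m * (\<Sum>x\<in>characters G. x m) = (\<Sum>x\<in>characters G. x m)"
    unfolding char_mult_def by (simp add: sum_distrib_left)
  then have "(\<Sum>x\<in>characters G. x m) = 0" using \<chi>(2) by (metis mult_cancel_right2)
  then show ?thesis using False by simp
qed

end


locale P31 = comm_group G for G :: "('g, 'm) monoid_scheme" (structure) +
  fixes st :: "'a::{real_normed_algebra,banach} \<Rightarrow> 'a" and sm :: "complex \<Rightarrow> 'a \<Rightarrow> 'a"
    and \<beta> :: "'g \<Rightarrow> 'a \<Rightarrow> 'a"
  assumes cs: "cstar_algebra st sm" and fin: "finite (carrier G)" and act: "group_action_on G st sm \<beta>"
begin

lemma sm_add: "sm c (x + y) = sm c x + sm c y" using cs unfolding cstar_algebra_def by (elim conjE) simp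
lemma sm_addc: "sm (c + d) x = sm c x + sm d x" using cs unfolding cstar_algebra_def by (elim conjE) simp
lemma sm_mult: "sm (c * d) x = sm c (sm d x)" using cs unfolding cstar_algebra_def by (elim conjE) simp
lemma sm_real: "sm (complex_of_real r) x = r *\<^sub>R x" using cs unfolding cstar_algebra_def by (elim conjE) simp
lemma sm_mlr_all: "\<forall>c x y. sm c (x * y) = sm c x * y \<and> sm c (x * y) = x * sm c y"
  using cs unfolding cstar_algebra_def by (elim conjE) assumption
lemma sm_ml: "sm c (x * y) = sm c x * y" using spec[OF spec[OF spec[OF sm_mlr_all, of c], of x], of y] by (rule conjunct1)
lemma sm_mr: "sm c (x * y) = x * sm c y" using spec[OF spec[OF spec[OF sm_mlr_all, of c], of x], of y] by (rule conjunct2)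
lemma st_add: "st (x + y) = st x + st y" using cs unfolding cstar_algebra_def by (elim conjE) simp
lemma st_sm: "st (sm c x) = sm (cnj c) (st x)" using cs unfolding cstar_algebra_def by (elim conjE) simp

lemma sm_one: "sm 1 x = x" using sm_real[of 1 x] by simp
lemma sm_zero_c: "sm 0 x = 0" using sm_real[of 0 x] by simp
lemma sm_zero: "sm c 0 = 0" using sm_add[of c 0 0] by simp
lemma sm_comm: "sm c (sm d x) = sm d (sm c x)" by (metis sm_mult mult.commute)
lemma sm_sum: "sm c (sum f A) = (\<Sum>i\<in>A. sm c (f i))"
  using sum_comp_morphism[of "sm c" f A] sm_zero sm_add by (simp add: o_def)
lemma sm_sum_c: "sm (sum f A) x = (\<Sum>i\<in>A. sm (f i) x)"
  using sum_comp_morphism[of "\<lambda>c. sm c x" f A] sm_zero_c sm_addc by (simp add: o_def)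
lemma sm_times: "sm c x * sm d y = sm (c * d) (x * y)"
  by (simp only: sm_mult sm_mr[of d x y] sm_ml[of c x "sm d y"])
lemma sm_cancel: assumes "c \<noteq> 0" "sm c u = sm c v" shows "u = v"
proof -
  have "sm (inverse c) (sm c u) = sm (inverse c) (sm c v)" using assms(2) by simp
  then show ?thesis using assms(1) by (simp add: sm_mult[symmetric] sm_one)
qed
lemma st_zero: "st 0 = 0" using st_add[of 0 0] by simp
lemma st_sum: "st (sum f A) = (\<Sum>i\<in>A. st (f i))"
  using sum_comp_morphism[of st f A] st_zero st_add by (simp add: o_def)
lemma sum_const_sm: "(\<Sum>i\<in>A. (y::'a)) = sm (of_nat (card A)) y"
  using sm_real[of "real (card A)" y] by (simp add: sum_constant_scaleR)

lemma b_aut: "k \<in> carrier G \<Longrightarrow> star_automorphism st sm (\<beta> k)"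
  using act unfolding group_action_on_def by blast
lemma b_add: "k \<in> carrier G \<Longrightarrow> \<beta> k (x + y) = \<beta> k x + \<beta> k y"
  using b_aut unfolding star_automorphism_def by blast
lemma b_mul: "k \<in> carrier G \<Longrightarrow> \<beta> k (x * y) = \<beta> k x * \<beta> k y"
  using b_aut unfolding star_automorphism_def by blast
lemma b_sm: "k \<in> carrier G \<Longrightarrow> \<beta> k (sm c x) = sm c (\<beta> k x)"
  using b_aut unfolding star_automorphism_def by blast
lemma b_st: "k \<in> carrier G \<Longrightarrow> \<beta> k (st x) = st (\<beta> k x)"
  using b_aut unfolding star_automorphism_def by blast
lemma b_one: "\<beta> \<one> x = x" using act unfolding group_action_on_def by simp
lemma b_comp: "g \<in> carrier G \<Longrightarrow> h \<in> carrier G \<Longrightarrow> \<beta> (g \<otimes> h) x = \<beta> g (\<beta> h x)"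
  using act unfolding group_action_on_def by simp
lemma b_zero: "k \<in> carrier G \<Longrightarrow> \<beta> k 0 = 0" using b_add[of k 0 0] by simp
lemma b_sum: "k \<in> carrier G \<Longrightarrow> \<beta> k (sum f A) = (\<Sum>i\<in>A. \<beta> k (f i))"
  using sum_comp_morphism[of "\<beta> k" f A] b_zero b_add by (simp add: o_def)


definition S :: "('g \<Rightarrow> complex) \<Rightarrow> 'a \<Rightarrow> 'a" where
  "S x a = (\<Sum>k\<in>carrier G. sm (x k) (\<beta> k a))"

lemma S_add: "S x (a + b) = S x a + S x b"
  unfolding S_def by (simp add: b_add sm_add sum.distrib)
lemma S_zero: "S x 0 = 0" unfolding S_def by (simp add: b_zero sm_zero)
lemma S_sm: "S x (sm c a) = sm c (S x a)" unfolding S_def by (simp add: b_sm sm_comm sm_sum)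
lemma S_sum: "S x (sum f A) = (\<Sum>i\<in>A. S x (f i))"
  using sum_comp_morphism[of "S x" f A] S_zero S_add by (simp add: o_def)

lemma S_shift: assumes x: "x \<in> characters G" and l: "l \<in> carrier G"
  shows "(\<Sum>k\<in>carrier G. sm (x k) (\<beta> (l \<otimes> k) a)) = sm (cnj (x l)) (S x a)"
proof -
  have "sm (cnj (x l)) (S x a) = (\<Sum>k\<in>carrier G. sm (cnj (x l) * x k) (\<beta> k a))"
    unfolding S_def by (simp add: sm_sum sm_mult)
  also have "\<dots> = (\<Sum>k\<in>carrier G. sm (x k) (\<beta> (l \<otimes> k) a))"
    by (rule sum.reindex_bij_witness[of _ "\<lambda>k. l \<otimes> k" "\<lambda>k. inv l \<otimes> k"])
       (use l in \<open>auto simp: m_assoc[symmetric] ch_mult[OF x] ch_inv[OF x]\<close>)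
  finally show ?thesis by simp
qed

lemma b_S: assumes x: "x \<in> characters G" and l: "l \<in> carrier G"
  shows "\<beta> l (S x a) = sm (cnj (x l)) (S x a)"
proof -
  have "\<beta> l (S x a) = (\<Sum>k\<in>carrier G. sm (x k) (\<beta> (l \<otimes> k) a))"
    unfolding S_def using l by (simp add: b_sum b_sm b_comp)
  then show ?thesis using S_shift[OF x l] by simp
qed

lemma S_b: assumes x: "x \<in> characters G" and l: "l \<in> carrier G"
  shows "S x (\<beta> l a) = \<beta> l (S x a)"
proof -
  have "S x (\<beta> l a) = (\<Sum>k\<in>carrier G. sm (x k) (\<beta> (l \<otimes> k) a))"
    unfolding S_def
  proof (rule sum.cong[OF refl])
    fix k assume k: "k \<in> carrier G"
    have "\<beta> k (\<beta> l a) = \<beta> (k \<otimes> l) a" using b_comp[OF k l] by simp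
    also have "\<dots> = \<beta> (l \<otimes> k) a" using m_comm[OF k l] by simp
    finally show "sm (x k) (\<beta> k (\<beta> l a)) = sm (x k) (\<beta> (l \<otimes> k) a)" by simp
  qed
  then show ?thesis using S_shift[OF x l] b_S[OF x l] by simp
qed

lemma st_S: assumes x: "x \<in> characters G" shows "st (S (char_inv x) a) = S x (st a)"
  unfolding S_def char_inv_def by (simp add: st_sum st_sm b_st)

lemma S_S: assumes x: "x \<in> characters G" and y: "y \<in> characters G"
  shows "S x (S y a) = (if x = y then sm (of_nat (order G)) (S y a) else 0)"
proof -
  have "S x (S y a) = (\<Sum>k\<in>carrier G. sm (x k * cnj (y k)) (S y a))"
    unfolding S_def[of x "S y a"] by (simp add: b_S[OF y] sm_mult)
  also have "\<dots> = sm (\<Sum>k\<in>carrier G. x k * cnj (y k)) (S y a)" by (simp add: sm_sum_c)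
  also have "\<dots> = (if x = y then sm (of_nat (order G)) (S y a) else 0)"
    using orth_G[OF fin x y] by (simp add: sm_zero_c)
  finally show ?thesis .
qed

lemma sum_S: "(\<Sum>x\<in>characters G. S x a) = sm (of_nat (card (characters G))) a"
proof -
  have "(\<Sum>x\<in>characters G. S x a) = (\<Sum>k\<in>carrier G. \<Sum>x\<in>characters G. sm (x k) (\<beta> k a))"
    unfolding S_def by (rule sum.swap)
  also have "\<dots> = (\<Sum>k\<in>carrier G. sm (\<Sum>x\<in>characters G. x k) (\<beta> k a))" by (simp add: sm_sum_c)
  also have "\<dots> = (\<Sum>k\<in>carrier G. if k = \<one> then sm (of_nat (card (characters G))) (\<beta> k a) else 0)"
    by (rule sum.cong[OF refl]) (simp add: orth_X[OF fin] sm_zero_c)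
  also have "\<dots> = sm (of_nat (card (characters G))) a" using fin by (simp add: b_one)
  finally show ?thesis .
qed

lemma inv_eq_one_iff: "k \<in> carrier G \<Longrightarrow> j \<in> carrier G \<Longrightarrow> (k \<otimes> inv j = \<one>) = (k = j)"
proof
  assume k: "k \<in> carrier G" and j: "j \<in> carrier G" and e: "k \<otimes> inv j = \<one>"
  have "k = (k \<otimes> inv j) \<otimes> j" using k j by (simp add: m_assoc)
  then show "k = j" using e j by simp
next
  assume "k \<in> carrier G" "j \<in> carrier G" "k = j" then show "k \<otimes> inv j = \<one>" by simp
qed

lemma S_mult: assumes t: "t \<in> characters G"
  shows "(\<Sum>g\<in>characters G. S g a * S (char_mult (char_inv g) t) b)
         = sm (of_nat (card (characters G))) (S t (a * b))"
proof -
  define F where "F g k j = sm (g k * (cnj (g j) * t j)) (\<beta> k a * \<beta> j b)" for g k j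
  have "(\<Sum>g\<in>characters G. S g a * S (char_mult (char_inv g) t) b)
      = (\<Sum>g\<in>characters G. \<Sum>k\<in>carrier G. \<Sum>j\<in>carrier G. F g k j)"
    unfolding S_def char_mult_def char_inv_def F_def by (simp add: sum_product sm_times)
  also have "\<dots> = (\<Sum>k\<in>carrier G. \<Sum>g\<in>characters G. \<Sum>j\<in>carrier G. F g k j)" by (rule sum.swap)
  also have "\<dots> = (\<Sum>k\<in>carrier G. \<Sum>j\<in>carrier G. \<Sum>g\<in>characters G. F g k j)"
    by (rule sum.cong[OF refl], rule sum.swap)
  also have "\<dots> = (\<Sum>k\<in>carrier G. \<Sum>j\<in>carrier G.
       if k = j then sm (of_nat (card (characters G)) * t k) (\<beta> k a * \<beta> k b) else 0)"
  proof (intro sum.cong[OF refl])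
    fix k j assume k: "k \<in> carrier G" and j: "j \<in> carrier G"
    have "(\<Sum>g\<in>characters G. F g k j) = sm (\<Sum>g\<in>characters G. g k * (cnj (g j) * t j)) (\<beta> k a * \<beta> j b)"
      unfolding F_def by (simp add: sm_sum_c)
    also have "(\<Sum>g\<in>characters G. g k * (cnj (g j) * t j)) = (\<Sum>g\<in>characters G. g (k \<otimes> inv j)) * t j"
      unfolding sum_distrib_right
      by (rule sum.cong[OF refl]) (simp add: ch_mult ch_inv k j mult.assoc)
    also have "\<dots> = (if k = j then of_nat (card (characters G)) else 0) * t j"
      using orth_X[OF fin, of "k \<otimes> inv j"] k j inv_eq_one_iff[OF k j] by simp
    finally show "(\<Sum>g\<in>characters G. F g k j) =
       (if k = j then sm (of_nat (card (characters G)) * t k) (\<beta> k a * \<beta> k b) else 0)"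
      by (simp add: sm_zero_c)
  qed
  also have "\<dots> = (\<Sum>k\<in>carrier G. sm (of_nat (card (characters G))) (sm (t k) (\<beta> k (a * b))))"
    using fin by (simp add: sm_mult b_mul)
  also have "\<dots> = sm (of_nat (card (characters G))) (S t (a * b))"
    unfolding S_def by (simp add: sm_sum)
  finally show ?thesis .
qed

end


lemma sum_apply_fun: "(sum f A) x = (\<Sum>a\<in>A. f a x)"
  by (induct A rule: infinite_finite_induct) auto

context P31 begin

definition c0 :: complex where "c0 = 1 / (of_nat (order G) * of_nat (card (characters G)))"

definition Psi :: "'a \<Rightarrow> ('g \<Rightarrow> complex) \<Rightarrow> 'g \<Rightarrow> 'a" where
  "Psi a = (\<lambda>x t. if x \<in> characters G \<and> t \<in> carrier G then sm (c0 * cnj (x t)) (S x a) else 0)"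

lemma N_pos: "card (characters G) > 0"
  using chars_finite[OF fin] char_one_in by (auto simp: card_gt_0_iff)
lemma n_pos: "order G > 0" using order_pos[OF fin] .
lemma c0_ne: "c0 \<noteq> 0" unfolding c0_def using N_pos n_pos by simp
lemma cnj_c0: "cnj c0 = c0" unfolding c0_def by simp
lemma c0_sq: "of_nat (order G) * (c0 * c0) * of_nat (card (characters G)) = c0"
  unfolding c0_def using N_pos n_pos by (simp add: field_simps)

lemma Psi_add: "Psi (a + b) = Psi a + Psi b"
  unfolding Psi_def by (intro ext) (simp add: S_add sm_add)

lemma Psi_scale: "Psi (sm c a) = scale2 sm c (Psi a)"
  unfolding Psi_def scale2_def cp_scale_def by (intro ext) (simp add: S_sm sm_comm sm_zero)

lemma Psi_star: "Psi (st a) = star2 G st sm \<beta> (Psi a)"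
proof (intro ext)
  fix x :: "'g \<Rightarrow> complex" and s :: 'g
  show "Psi (st a) x s = star2 G st sm \<beta> (Psi a) x s"
  proof (cases "x \<in> characters G \<and> s \<in> carrier G")
    case True
    then have x: "x \<in> characters G" and s: "s \<in> carrier G" by auto
    have e1: "Psi a (char_inv x) (inv s) = sm (c0 * cnj (x s)) (S (char_inv x) a)"
      unfolding Psi_def using char_inv_in[OF x] s by (simp add: char_inv_def ch_inv[OF x s])
    have "star2 G st sm \<beta> (Psi a) x s = sm (cnj (x s)) (\<beta> s (st (Psi a (char_inv x) (inv s))))"
      unfolding star2_def cp_star_def star1_def dual_action_def using x s by simp
    also have "\<dots> = sm (cnj (x s) * ((c0 * x s) * cnj (x s))) (S x (st a))"
      unfolding e1 using s x by (simp add: st_sm st_S[OF x] b_sm b_S[OF x s] cnj_c0 sm_mult)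
    also have "cnj (x s) * ((c0 * x s) * cnj (x s)) = (c0 * cnj (x s)) * (x s * cnj (x s))"
      by (simp add: ac_simps)
    also have "\<dots> = c0 * cnj (x s)" using ch_cnj[OF x s] by simp
    finally show ?thesis unfolding Psi_def using x s by simp
  next
    case False
    then show ?thesis unfolding Psi_def star2_def cp_star_def star1_def dual_action_def
      by (auto simp: sm_zero)
  qed
qed

lemma Psi_mult: "Psi (a * b) = mult2 G sm \<beta> (Psi a) (Psi b)"
proof (intro ext)
  fix t :: "'g \<Rightarrow> complex" and s0 :: 'g
  define y where "y g = char_mult (char_inv g) t" for g
  define D where "D g = dual_action sm g (Psi b (y g))" for g
  show "Psi (a * b) t s0 = mult2 G sm \<beta> (Psi a) (Psi b) t s0"
  proof (cases "t \<in> characters G \<and> s0 \<in> carrier G")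
    case True
    then have t: "t \<in> characters G" and s0: "s0 \<in> carrier G" by auto
    have yX: "y g \<in> characters G" if "g \<in> characters G" for g
      unfolding y_def using that t by (simp add: char_mult_in char_inv_in)
    have trm: "Psi a g h * \<beta> h (D g (inv h \<otimes> s0)) = sm (c0 * c0 * cnj (t s0)) (S g a * S (y g) b)"
      if g: "g \<in> characters G" and h: "h \<in> carrier G" for g h
    proof -
      have u: "inv h \<otimes> s0 \<in> carrier G" using h s0 by simp
      have yv: "y g (inv h \<otimes> s0) = cnj (g (inv h \<otimes> s0)) * t (inv h \<otimes> s0)"
        unfolding y_def char_mult_def char_inv_def by simp
      have D1: "D g (inv h \<otimes> s0) = sm (cnj (g (inv h \<otimes> s0)) * (c0 * cnj (y g (inv h \<otimes> s0)))) (S (y g) b)"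
        unfolding D_def dual_action_def Psi_def using yX[OF g] u by (simp add: sm_mult)
      have sc: "cnj (g (inv h \<otimes> s0)) * (c0 * cnj (y g (inv h \<otimes> s0))) = c0 * (t h * cnj (t s0))"
      proof -
        have "cnj (g (inv h \<otimes> s0)) * (c0 * cnj (y g (inv h \<otimes> s0)))
            = c0 * cnj (t (inv h \<otimes> s0)) * (cnj (g (inv h \<otimes> s0)) * g (inv h \<otimes> s0))"
          unfolding yv by (simp add: ac_simps)
        also have "\<dots> = c0 * cnj (t (inv h \<otimes> s0))" using ch_cnj'[OF g u] by simp
        also have "\<dots> = c0 * (t h * cnj (t s0))"
          using ch_mult[OF t _ s0, of "inv h"] ch_inv[OF t h] h by simp
        finally show ?thesis .
      qed
      have D2: "D g (inv h \<otimes> s0) = sm (c0 * (t h * cnj (t s0))) (S (y g) b)"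
        using D1 unfolding sc .
      have yh: "cnj (y g h) = g h * cnj (t h)" unfolding y_def char_mult_def char_inv_def by simp
      have "Psi a g h * \<beta> h (D g (inv h \<otimes> s0))
          = sm (c0 * cnj (g h)) (S g a) * sm (c0 * (t h * cnj (t s0)) * cnj (y g h)) (S (y g) b)"
        unfolding D2 Psi_def using g h by (simp add: b_sm b_S[OF yX[OF g] h] sm_mult)
      also have "\<dots> = sm ((c0 * cnj (g h)) * (c0 * (t h * cnj (t s0)) * (g h * cnj (t h)))) (S g a * S (y g) b)"
        unfolding yh by (rule sm_times)
      also have "(c0 * cnj (g h)) * (c0 * (t h * cnj (t s0)) * (g h * cnj (t h)))
          = c0 * c0 * cnj (t s0) * (cnj (g h) * g h) * (t h * cnj (t h))"
        by (simp add: ac_simps)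
      also have "\<dots> = c0 * c0 * cnj (t s0)" using ch_cnj'[OF g h] ch_cnj[OF t h] by simp
      finally show ?thesis .
    qed
    have "mult2 G sm \<beta> (Psi a) (Psi b) t s0
        = (\<Sum>g\<in>characters G. \<Sum>h\<in>carrier G. Psi a g h * \<beta> h (D g (inv h \<otimes> s0)))"
      unfolding mult2_def cp_mult_def mult1_def D_def y_def using t s0 by (simp add: sum_apply_fun)
    also have "\<dots> = (\<Sum>g\<in>characters G. \<Sum>h\<in>carrier G. sm (c0 * c0 * cnj (t s0)) (S g a * S (y g) b))"
      by (intro sum.cong[OF refl]) (simp add: trm)
    also have "\<dots> = (\<Sum>g\<in>characters G. sm (of_nat (order G) * (c0 * c0 * cnj (t s0))) (S g a * S (y g) b))"
      by (simp add: sum_const_sm sm_mult order_def)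
    also have "\<dots> = sm (of_nat (order G) * (c0 * c0 * cnj (t s0))) (sm (of_nat (card (characters G))) (S t (a * b)))"
      unfolding y_def by (simp add: sm_sum[symmetric] S_mult[OF t])
    also have "\<dots> = sm (c0 * cnj (t s0)) (S t (a * b))"
    proof -
      have "of_nat (order G) * (c0 * c0 * cnj (t s0)) * of_nat (card (characters G)) = c0 * cnj (t s0)"
        using c0_sq by (auto simp: ac_simps)
      then show ?thesis by (simp only: sm_mult[symmetric])
    qed
    finally show ?thesis unfolding Psi_def using t s0 by simp
  next
    case False
    then show ?thesis unfolding Psi_def mult2_def cp_mult_def mult1_def by (auto simp: sum_apply_fun)
  qed
qed


definition cF :: "(('g \<Rightarrow> complex) \<Rightarrow> 'g \<Rightarrow> 'a) \<Rightarrow> ('g \<Rightarrow> complex) \<Rightarrow> 'a" where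
  "cF F x = (\<Sum>m\<in>carrier G. sm (x m) (F x m))"

lemma rmul_zero: "rmul_scalars G sm c 0 = 0"
  unfolding rmul_scalars_def by (intro ext) (simp add: sm_zero)
lemma pL1_zero: "pL1 G sm \<beta> 0 = 0"
  unfolding pL1_def by (intro ext) (simp add: sm_zero b_zero)

lemma gf1: "m \<in> carrier G \<Longrightarrow> u \<in> carrier G \<Longrightarrow> u \<otimes> inv (inv m \<otimes> u) = m"
  by (simp add: inv_mult m_lcomm)
lemma gf2: "k \<in> carrier G \<Longrightarrow> u \<in> carrier G \<Longrightarrow> inv (u \<otimes> inv k) \<otimes> u = k"
  by (simp add: inv_mult m_lcomm m_comm)

lemma corner_formula:
  assumes F0: "\<And>x. x \<notin> characters G \<Longrightarrow> F x = 0"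
  shows "pL2 G sm \<beta> (pR2 G sm F) = (\<lambda>x t. if x \<in> characters G \<and> t \<in> carrier G
     then sm (cnj (x t) / (of_nat (card (carrier G)) * of_nat (card (carrier G)))) (S x (cF F x)) else 0)"
proof (intro ext)
  fix x :: "'g \<Rightarrow> complex" and t :: 'g
  let ?n = "of_nat (card (carrier G)) :: complex"
  have n0: "?n \<noteq> 0" using n_pos unfolding order_def by simp
  show "pL2 G sm \<beta> (pR2 G sm F) x t = (if x \<in> characters G \<and> t \<in> carrier G
     then sm (cnj (x t) / (?n * ?n)) (S x (cF F x)) else 0)"
  proof (cases "x \<in> characters G \<and> t \<in> carrier G")
    case True
    then have x: "x \<in> characters G" and t: "t \<in> carrier G" by auto
    have inner: "(\<Sum>k\<in>carrier G. sm (cnj (x k) / ?n) (F x (u \<otimes> inv k))) = sm (cnj (x u) / ?n) (cF F x)"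
      if u: "u \<in> carrier G" for u
    proof -
      have "sm (cnj (x u) / ?n) (cF F x) = (\<Sum>m\<in>carrier G. sm (cnj (x u) / ?n * x m) (F x m))"
        unfolding cF_def sm_sum by (simp only: sm_mult[symmetric])
      also have "\<dots> = (\<Sum>k\<in>carrier G. sm (cnj (x k) / ?n) (F x (u \<otimes> inv k)))"
      proof (rule sum.reindex_bij_witness[of _ "\<lambda>k. u \<otimes> inv k" "\<lambda>m. inv m \<otimes> u"])
        fix m assume m: "m \<in> carrier G"
        show "u \<otimes> inv (inv m \<otimes> u) = m" using gf1[OF m u] .
        show "inv m \<otimes> u \<in> carrier G" using m u by simp
        have "x (inv m \<otimes> u) = cnj (x m) * x u" using ch_mult[OF x _ u, of "inv m"] ch_inv[OF x m] m by simp
        then show "sm (cnj (x (inv m \<otimes> u)) / ?n) (F x (u \<otimes> inv (inv m \<otimes> u))) = sm (cnj (x u) / ?n * x m) (F x m)"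
          using gf1[OF m u] by (simp add: ac_simps)
      next
        fix k assume k: "k \<in> carrier G"
        show "inv (u \<otimes> inv k) \<otimes> u = k" using gf2[OF k u] .
        show "u \<otimes> inv k \<in> carrier G" using k u by simp
      qed
      finally show ?thesis by simp
    qed
    have "pL2 G sm \<beta> (pR2 G sm F) x t
        = (\<Sum>j\<in>carrier G. sm (1 / ?n) (\<beta> j (sm (cnj (x (inv j \<otimes> t)) / ?n) (cF F x))))"
      unfolding pL2_def pL1_def pR2_def rmul_scalars_def using t by (simp add: inner)
    also have "\<dots> = (\<Sum>j\<in>carrier G. sm (cnj (x t) / (?n * ?n)) (sm (x j) (\<beta> j (cF F x))))"
    proof (rule sum.cong[OF refl])
      fix j assume j: "j \<in> carrier G"
      have xj: "x (inv j \<otimes> t) = cnj (x j) * x t" using ch_mult[OF x _ t, of "inv j"] ch_inv[OF x j] j by simp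
      have "1 / ?n * (cnj (x (inv j \<otimes> t)) / ?n) = cnj (x t) / (?n * ?n) * x j"
        unfolding xj by simp
      then show "sm (1 / ?n) (\<beta> j (sm (cnj (x (inv j \<otimes> t)) / ?n) (cF F x)))
          = sm (cnj (x t) / (?n * ?n)) (sm (x j) (\<beta> j (cF F x)))"
        using j by (simp only: b_sm sm_mult[symmetric])
    qed
    also have "\<dots> = sm (cnj (x t) / (?n * ?n)) (S x (cF F x))" unfolding S_def by (simp add: sm_sum)
    finally show ?thesis using x t by simp
  next
    case False
    then show ?thesis
    proof (cases "x \<in> characters G")
      case True
      then have "t \<notin> carrier G" using False by simp
      then show ?thesis unfolding pL2_def pL1_def by simp
    next
      case False
      then have "pR2 G sm F x = 0" unfolding pR2_def using F0 by (simp add: rmul_zero)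
      then show ?thesis unfolding pL2_def using False by (simp add: pL1_zero)
    qed
  qed
qed


lemma S_fixed_zero:
  assumes x: "x \<in> characters G" and l: "l \<in> carrier G" and a: "\<beta> l a = a" and xl: "x l \<noteq> 1"
  shows "S x a = 0"
proof -
  let ?c = "cnj (x l)"
  have "S x a = S x (\<beta> l a)" using a by simp
  also have "\<dots> = \<beta> l (S x a)" by (rule S_b[OF x l])
  also have "\<dots> = sm ?c (S x a)" by (rule b_S[OF x l])
  finally have e: "S x a = sm ?c (S x a)" .
  have "sm (1 - ?c) (S x a) + sm ?c (S x a) = S x a" using sm_addc[of "1 - ?c" ?c "S x a"] by (simp add: sm_one)
  then have "sm (1 - ?c) (S x a) = sm (1 - ?c) 0" using e by (simp add: sm_zero)
  moreover have "1 - ?c \<noteq> 0" using xl by simp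
  ultimately show ?thesis using sm_cancel by blast
qed

lemma scal1: "cnj z / (of_nat (card (carrier G)) * of_nat (card (carrier G))) *
   (of_nat (order G) / of_nat (card (characters G))) = c0 * cnj z"
  unfolding c0_def order_def using n_pos N_pos unfolding order_def by (simp add: field_simps)

lemma scal2: "c0 * cnj z * (of_nat (card (characters G)) / (of_nat (order G))\<^sup>2) * of_nat (order G)
   = cnj z / (of_nat (card (carrier G)) * of_nat (card (carrier G)))"
  unfolding c0_def order_def using n_pos N_pos unfolding order_def by (simp add: field_simps power2_eq_square)

lemma fixed_to_corner:
  assumes L: "subgroup L G" and a: "a \<in> fixed_points \<beta> L"
  shows "Psi a \<in> corner2 G sm \<beta> (annihilator G L)"
proof -
  define v where "v = sm (of_nat (order G) / of_nat (card (characters G))) a"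
  define F where "F x = (if x \<in> annihilator G L then (\<lambda>m. if m = \<one> then v else 0) else 0)" for x
  have FC: "F \<in> CP2_over G (annihilator G L)"
    unfolding CP2_over_def cp_carrier_def CP1_def F_def annihilator_def by auto
  have F0: "\<And>x. x \<notin> characters G \<Longrightarrow> F x = 0" unfolding F_def annihilator_def by auto
  have cFv: "cF F x = v" if xa: "x \<in> annihilator G L" for x
  proof -
    have x: "x \<in> characters G" using xa unfolding annihilator_def by simp
    have "cF F x = (\<Sum>m\<in>carrier G. if m = \<one> then sm (x m) v else 0)"
      unfolding cF_def F_def using xa by (intro sum.cong[OF refl]) (simp add: sm_zero)
    also have "\<dots> = v" using fin ch_one[OF x] by (simp add: sm_one)
    finally show ?thesis .
  qed
  have cF0: "cF F x = 0" if "x \<notin> annihilator G L" for x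
    unfolding cF_def F_def using that by (simp add: sm_zero)
  have "pL2 G sm \<beta> (pR2 G sm F) = Psi a"
  proof (intro ext)
    fix x :: "'g \<Rightarrow> complex" and t :: 'g
    show "pL2 G sm \<beta> (pR2 G sm F) x t = Psi a x t"
    proof (cases "x \<in> characters G \<and> t \<in> carrier G")
      case True
      then have x: "x \<in> characters G" and t: "t \<in> carrier G" by auto
      have cf: "pL2 G sm \<beta> (pR2 G sm F) x t = sm (cnj (x t) / (of_nat (card (carrier G)) * of_nat (card (carrier G)))) (S x (cF F x))"
        by (subst corner_formula[OF F0]) (simp_all add: x t)
      show ?thesis
      proof (cases "x \<in> annihilator G L")
        case True
        have "sm (cnj (x t) / (of_nat (card (carrier G)) * of_nat (card (carrier G)))) (S x v)
            = sm (c0 * cnj (x t)) (S x a)"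
          unfolding v_def S_sm sm_mult[symmetric] scal1 ..
        then show ?thesis unfolding Psi_def cf using x t cFv[OF True] by simp
      next
        case False
        then obtain l where l: "l \<in> L" "x l \<noteq> 1" using x unfolding annihilator_def by auto
        have lc: "l \<in> carrier G" using subgroup.mem_carrier[OF L l(1)] .
        have "\<beta> l a = a" using a l(1) unfolding fixed_points_def by simp
        then have "S x a = 0" using S_fixed_zero[OF x lc _ l(2)] by simp
        then show ?thesis unfolding cf Psi_def using x t cF0[OF False]
          by (simp add: S_zero sm_zero)
      qed
    next
      case False
      then show ?thesis unfolding Psi_def by (subst corner_formula[OF F0]) auto
    qed
  qed
  then show ?thesis unfolding corner2_def using FC by (metis image_eqI)
qed

lemma corner_to_fixed:
  assumes L: "subgroup L G" and F: "F \<in> CP2_over G (annihilator G L)"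
  shows "pL2 G sm \<beta> (pR2 G sm F) \<in> Psi ` fixed_points \<beta> L"
proof -
  have F0: "\<And>x. x \<notin> characters G \<Longrightarrow> F x = 0" using F unfolding CP2_over_def cp_carrier_def by blast
  have F1: "\<And>x. x \<notin> annihilator G L \<Longrightarrow> F x = 0" using F unfolding CP2_over_def by blast
  define a where "a = sm (of_nat (card (characters G)) / (of_nat (order G))\<^sup>2) (\<Sum>y\<in>characters G. S y (cF F y))"
  have fx: "a \<in> fixed_points \<beta> L"
    unfolding fixed_points_def
  proof (intro CollectI ballI)
    fix l assume l: "l \<in> L"
    have lc: "l \<in> carrier G" using subgroup.mem_carrier[OF L l] .
    have "\<beta> l (\<Sum>y\<in>characters G. S y (cF F y)) = (\<Sum>y\<in>characters G. S y (cF F y))"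
      unfolding b_sum[OF lc]
    proof (rule sum.cong[OF refl])
      fix y assume y: "y \<in> characters G"
      show "\<beta> l (S y (cF F y)) = S y (cF F y)"
      proof (cases "y \<in> annihilator G L")
        case True then have "y l = 1" using l unfolding annihilator_def by auto
        then show ?thesis using b_S[OF y lc] by (simp add: sm_one)
      next
        case False then have "cF F y = 0" using F1 unfolding cF_def by (simp add: sm_zero)
        then show ?thesis using b_S[OF y lc] by (simp add: S_zero sm_zero b_zero[OF lc])
      qed
    qed
    then show "\<beta> l a = a" unfolding a_def using lc by (simp add: b_sm)
  qed
  have "Psi a = pL2 G sm \<beta> (pR2 G sm F)"
  proof (intro ext)
    fix x :: "'g \<Rightarrow> complex" and t :: 'g
    show "Psi a x t = pL2 G sm \<beta> (pR2 G sm F) x t"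
    proof (cases "x \<in> characters G \<and> t \<in> carrier G")
      case True
      then have x: "x \<in> characters G" and t: "t \<in> carrier G" by auto
      have cf: "pL2 G sm \<beta> (pR2 G sm F) x t = sm (cnj (x t) / (of_nat (card (carrier G)) * of_nat (card (carrier G)))) (S x (cF F x))"
        by (subst corner_formula[OF F0]) (simp_all add: x t)
      have "(\<Sum>y\<in>characters G. S x (S y (cF F y)))
          = (\<Sum>y\<in>characters G. if x = y then sm (of_nat (order G)) (S y (cF F y)) else 0)"
        by (rule sum.cong[OF refl]) (simp add: S_S[OF x])
      also have "\<dots> = sm (of_nat (order G)) (S x (cF F x))"
        using chars_finite[OF fin] x by simp
      finally have e: "(\<Sum>y\<in>characters G. S x (S y (cF F y))) = sm (of_nat (order G)) (S x (cF F x))" .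
      have "sm (c0 * cnj (x t)) (S x a) = sm (cnj (x t) / (of_nat (card (carrier G)) * of_nat (card (carrier G)))) (S x (cF F x))"
        unfolding a_def S_sm S_sum e sm_mult[symmetric] mult.assoc[symmetric] scal2 ..
      then show ?thesis unfolding cf Psi_def using x t by simp
    next
      case False
      then show ?thesis unfolding Psi_def by (subst corner_formula[OF F0]) auto
    qed
  qed
  then show ?thesis using fx by (metis image_eqI)
qed

lemma Psi_fixed: assumes L: "subgroup L G"
  shows "Psi ` fixed_points \<beta> L = corner2 G sm \<beta> (annihilator G L)"
proof
  show "Psi ` fixed_points \<beta> L \<subseteq> corner2 G sm \<beta> (annihilator G L)"
    using fixed_to_corner[OF L] by blast
  show "corner2 G sm \<beta> (annihilator G L) \<subseteq> Psi ` fixed_points \<beta> L"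
    unfolding corner2_def using corner_to_fixed[OF L] by blast
qed

lemma Psi_inj: "inj Psi"
proof (rule injI)
  fix a b assume e: "Psi a = Psi b"
  have "S x a = S x b" if x: "x \<in> characters G" for x
  proof -
    have "Psi a x \<one> = Psi b x \<one>" using e by simp
    then have "sm c0 (S x a) = sm c0 (S x b)" unfolding Psi_def using x ch_one[OF x] by simp
    then show ?thesis using sm_cancel[OF c0_ne] by blast
  qed
  then have "(\<Sum>x\<in>characters G. S x a) = (\<Sum>x\<in>characters G. S x b)" by simp
  then have "sm (of_nat (card (characters G))) a = sm (of_nat (card (characters G))) b"
    unfolding sum_S .
  moreover have "(of_nat (card (characters G)) :: complex) \<noteq> 0" using N_pos by simp
  ultimately show "a = b" using sm_cancel by blast
qed

lemma ann_triv: "annihilator G {\<one>} = characters G"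
  unfolding annihilator_def using ch_one by auto
lemma fixed_triv: "fixed_points \<beta> {\<one>} = UNIV"
  unfolding fixed_points_def by (simp add: b_one)

lemma Psi_image: "Psi ` UNIV = corner2 G sm \<beta> (characters G)"
  using Psi_fixed[OF triv_subgroup] ann_triv fixed_triv by simp

lemma ann_full: "annihilator G (carrier G) = {char_one}"
proof
  show "annihilator G (carrier G) \<subseteq> {char_one}"
  proof
    fix x assume "x \<in> annihilator G (carrier G)"
    then have x: "x \<in> characters G" "\<forall>g\<in>carrier G. x g = 1" unfolding annihilator_def by auto
    have "x = char_one" unfolding char_one_def
    proof
      fix g show "x g = 1" using x ch_out[OF x(1), of g] by (cases "g \<in> carrier G") auto
    qed
    then show "x \<in> {char_one}" by simp
  qed
  show "{char_one} \<subseteq> annihilator G (carrier G)"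
    unfolding annihilator_def using char_one_in by (simp add: char_one_def)
qed

lemma corner2_one: "corner2 G sm \<beta> {char_one} = embed2 ` corner1 G sm \<beta>"
proof -
  have C: "CP2_over G {char_one} = embed2 ` CP1 G"
  proof
    show "CP2_over G {char_one} \<subseteq> embed2 ` CP1 G"
    proof
      fix F assume F: "F \<in> CP2_over G {char_one}"
      have "F = embed2 (F char_one)" unfolding embed2_def
        using F unfolding CP2_over_def by (intro ext) auto
      moreover have "F char_one \<in> CP1 G"
        using F char_one_in unfolding CP2_over_def cp_carrier_def by blast
      ultimately show "F \<in> embed2 ` CP1 G" by blast
    qed
    show "embed2 ` CP1 G \<subseteq> CP2_over G {char_one}"
      unfolding CP2_over_def cp_carrier_def embed2_def CP1_def using char_one_in by auto
  qed
  have P: "pL2 G sm \<beta> (pR2 G sm (embed2 f)) = embed2 (pL1 G sm \<beta> (pR1 G sm f))" for f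
  proof (intro ext)
    fix x :: "'g \<Rightarrow> complex" and t :: 'g
    show "pL2 G sm \<beta> (pR2 G sm (embed2 f)) x t = embed2 (pL1 G sm \<beta> (pR1 G sm f)) x t"
    proof (cases "x = char_one")
      case True then show ?thesis unfolding pL2_def pR2_def embed2_def pR1_def by (simp add: char_one_def)
    next
      case False then show ?thesis unfolding pL2_def pR2_def embed2_def by (simp add: rmul_zero pL1_zero)
    qed
  qed
  show ?thesis unfolding corner2_def corner1_def C image_image P ..
qed

end

theorem proposition3p1:
  fixes G :: "('g, 'm) monoid_scheme"
    and st :: "'a::{real_normed_algebra,banach} \<Rightarrow> 'a"
    and sm :: "complex \<Rightarrow> 'a \<Rightarrow> 'a"
    and \<beta> :: "'g \<Rightarrow> 'a \<Rightarrow> 'a"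
  assumes "cstar_algebra st sm"
    and "comm_group G"
    and "finite (carrier G)"
    and "group_action_on G st sm \<beta>"
  shows "\<exists>\<psi>. star_iso_onto G st sm \<beta> \<psi> (corner2 G sm \<beta> (characters G)) \<and>
             \<psi> ` fixed_points \<beta> (carrier G) = embed2 ` corner1 G sm \<beta> \<and>
             (\<forall>L. subgroup L G \<longrightarrow>
                \<psi> ` fixed_points \<beta> L = corner2 G sm \<beta> (annihilator G L))"
proof -
  interpret P: P31 G st sm \<beta>
    using assms unfolding P31_def P31_axioms_def by simp
  have iso: "star_iso_onto G st sm \<beta> P.Psi (corner2 G sm \<beta> (characters G))"
    unfolding star_iso_onto_def bij_betw_def
    using P.Psi_inj P.Psi_image P.Psi_add P.Psi_scale P.Psi_mult P.Psi_star by simp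
  have fixG: "P.Psi ` fixed_points \<beta> (carrier G) = embed2 ` corner1 G sm \<beta>"
    using P.Psi_fixed[OF P.subgroup_self] P.ann_full P.corner2_one by simp
  show ?thesis using iso fixG P.Psi_fixed by blast
qed

end
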